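(* Let $n,m,k$ be integers with $n\geq m\geq 1$ and $k\geq 3$. Then $$ gr_{k}(K_{3} : S(n,m))\geq \begin{cases} \max\{5\cdot\frac{n}{2},\,n+2m+1\} + m(k-3)+1 & \text{ if $n$ is even,}\\ \max\{5\cdot\frac{n-1}{2},\,n+2m+1\}+ m(k-3)+ 2 & \text{ if $n$ is odd.} \end{cases} $$
   Context: For integers $n\geq m\geq 0$, the double star $S(n,m)$ is the graph obtained from the disjoint union of the stars $K_{1,n}$ and $K_{1,m}$ by adding an edge between their centers. A $k$-coloring of a graph is an assignment of one of $k$ colors to each edge. A subgraph is rainbow if all its edges have distinct colors and monochromatic if all its edges have the same color. For graphs $G,H$ and a positive integer $k$, the Gallai–Ramsey number $gr_k(G:H)$ is the minimum integer $N$ such that every $k$-coloring of the edges of the complete graph $K_N$ contains either a rainbow copy of $G$ or a monochromatic copy of $H$. *)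

theory Defs
  imports Main
begin

text \<open>Values on the diagonal are irrelevant.\<close>
definition edge_coloring :: "nat \<Rightarrow> nat \<Rightarrow> (nat \<Rightarrow> nat \<Rightarrow> nat) \<Rightarrow> bool" where
  "edge_coloring N k c \<longleftrightarrow>
     (\<forall>x<N. \<forall>y<N. x \<noteq> y \<longrightarrow> c x y = c y x \<and> c x y < k)"

definition has_rainbow_K3 :: "nat \<Rightarrow> (nat \<Rightarrow> nat \<Rightarrow> nat) \<Rightarrow> bool" where
  "has_rainbow_K3 N c \<longleftrightarrow>
     (\<exists>x<N. \<exists>y<N. \<exists>z<N. x \<noteq> y \<and> y \<noteq> z \<and> x \<noteq> z \<and>
        c x y \<noteq> c y z \<and> c y z \<noteq> c x z \<and> c x y \<noteq> c x z)"

definition has_mono_double_star :: "nat \<Rightarrow> nat \<Rightarrow> nat \<Rightarrow> (nat \<Rightarrow> nat \<Rightarrow> nat) \<Rightarrow> bool" where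
  "has_mono_double_star n m N c \<longleftrightarrow>
     (\<exists>u v A B col. u < N \<and> v < N \<and> u \<noteq> v \<and>
        A \<subseteq> {0..<N} \<and> B \<subseteq> {0..<N} \<and> card A = n \<and> card B = m \<and>
        u \<notin> A \<and> v \<notin> A \<and> u \<notin> B \<and> v \<notin> B \<and> A \<inter> B = {} \<and>
        c u v = col \<and> (\<forall>a\<in>A. c u a = col) \<and> (\<forall>b\<in>B. c v b = col))"

definition gr_K3_double_star :: "nat \<Rightarrow> nat \<Rightarrow> nat \<Rightarrow> nat" where
  "gr_K3_double_star k n m =
     (LEAST N. \<forall>c. edge_coloring N k c \<longrightarrow>
                    has_rainbow_K3 N c \<or> has_mono_double_star n m N c)"

end

theory Submission
  imports Defs "HOL-Library.Ramsey"
begin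

section \<open>Finiteness via Ramsey\<close>

lemma ex_P:
  assumes "k > 0"
  shows "\<exists>N. \<forall>c. edge_coloring N k c \<longrightarrow> has_mono_double_star n m N c"
proof -
  obtain N :: nat where N: "partn_lst {..<N} (replicate k (n+m+2)) 2"
    using ramsey_full[where qs="replicate k (n+m+2)" and r=2] by blast
  show ?thesis
  proof (intro exI allI impI)
    fix c assume ec: "edge_coloring N k c"
    define f where "f = (\<lambda>e::nat set. c (Min e) (Max e))"
    have fxy: "f {x, y} = c x y" if "x < N" "y < N" "x \<noteq> y" for x y
      using ec that unfolding f_def edge_coloring_def
      by (cases "x < y") (auto simp: min_def max_def)
    have "f \<in> nsets {..<N} 2 \<rightarrow> {..<k}"
    proof
      fix e assume "e \<in> nsets {..<N} 2"
      then obtain x y where "e = {x,y}" "x \<in> {..<N}" "y \<in> {..<N}" "x \<noteq> y"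
        by (auto elim: nsets2_E)
      then show "f e \<in> {..<k}" using fxy ec unfolding edge_coloring_def by auto
    qed
    from partn_lstE[OF N this length_replicate] obtain i H where
      H: "H \<in> nsets {..<N} (n+m+2)" "f ` nsets H 2 \<subseteq> {i}"
      by (metis nth_replicate length_replicate)
    have Hs: "H \<subseteq> {..<N}" "finite H" "card H = n+m+2"
      using H by (auto simp: nsets_def)
    have col: "c x y = i" if "x \<in> H" "y \<in> H" "x \<noteq> y" for x y
    proof -
      have "{x,y} \<in> nsets H 2" using that by simp
      then have "f {x,y} = i" using H(2) by blast
      moreover have "f {x,y} = c x y" using fxy that Hs by blast
      ultimately show ?thesis by simp
    qed
    obtain u where u: "u \<in> H" using Hs by fastforce
    have "card (H - {u}) = n+m+1" using Hs u by simp
    then have "H - {u} \<noteq> {}" by (metis card.empty add_is_0 one_neq_zero)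
    then obtain v where v: "v \<in> H - {u}" by blast
    have c2: "card (H - {u,v}) = n+m" using Hs u v
      by (simp add: card_Diff_subset)
    then obtain A where A: "A \<subseteq> H - {u,v}" "card A = n" "finite A"
      by (metis le_add1 obtain_subset_with_card_n)
    define B where "B = H - {u,v} - A"
    have cB: "card B = m" unfolding B_def using A c2 Hs
      by (simp add: card_Diff_subset)
    show "has_mono_double_star n m N c"
      unfolding has_mono_double_star_def
      apply (rule exI[of _ u], rule exI[of _ v], rule exI[of _ A], rule exI[of _ B], rule exI[of _ i])
      using u v A cB Hs col unfolding B_def by auto
  qed
qed


section \<open>Neighbourhood criterion\<close>

definition nb :: "nat \<Rightarrow> (nat \<Rightarrow> nat \<Rightarrow> nat) \<Rightarrow> nat \<Rightarrow> nat \<Rightarrow> nat set" where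
  "nb N c col u = {x. x < N \<and> x \<noteq> u \<and> c u x = col}"

definition crit :: "nat \<Rightarrow> nat \<Rightarrow> nat \<Rightarrow> (nat \<Rightarrow> nat \<Rightarrow> nat) \<Rightarrow> bool" where
  "crit n m N c \<longleftrightarrow> (\<forall>u<N. \<forall>v<N. u \<noteq> v \<longrightarrow>
     card (nb N c (c u v) u) \<le> n \<or> card (nb N c (c u v) v) \<le> m \<or>
     card (nb N c (c u v) u \<union> nb N c (c u v) v) \<le> n + m + 1)"

lemma finite_nb[simp]: "finite (nb N c col u)"
  unfolding nb_def by auto

lemma crit_no_mono:
  assumes ec: "edge_coloring N k c" and cr: "crit n m N c"
  shows "\<not> has_mono_double_star n m N c"
proof
  assume "has_mono_double_star n m N c"
  then obtain u v A B col where H: "u < N" "v < N" "u \<noteq> v"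
        "A \<subseteq> {0..<N}" "B \<subseteq> {0..<N}" "card A = n" "card B = m"
        "u \<notin> A" "v \<notin> A" "u \<notin> B" "v \<notin> B" "A \<inter> B = {}"
        "c u v = col" "\<forall>a\<in>A. c u a = col" "\<forall>b\<in>B. c v b = col"
    unfolding has_mono_double_star_def by blast
  have fA: "finite A" "finite B" using H(4,5) finite_subset by auto
  have cvu: "c v u = col" using ec H unfolding edge_coloring_def by metis
  have s1: "insert v A \<subseteq> nb N c col u" using H unfolding nb_def by auto
  have s2: "insert u B \<subseteq> nb N c col v" using H cvu unfolding nb_def by auto
  have "card (insert v A) = n + 1" using H fA by simp
  then have c1: "card (nb N c col u) \<ge> n + 1"
    by (metis card_mono finite_nb s1)
  have "card (insert u B) = m + 1" using H fA by simp
  then have c2: "card (nb N c col v) \<ge> m + 1"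
    by (metis card_mono finite_nb s2)
  have "card (insert u (insert v (A \<union> B))) = n + m + 2"
    using H fA by (simp add: card_Un_disjoint)
  moreover have "insert u (insert v (A \<union> B)) \<subseteq> nb N c col u \<union> nb N c col v"
    using s1 s2 by auto
  ultimately have c3: "card (nb N c col u \<union> nb N c col v) \<ge> n + m + 2"
    by (metis card_mono finite_nb finite_Un)
  show False using cr H c1 c2 c3 unfolding crit_def by fastforce
qed


section \<open>Join of a block\<close>

definition join :: "nat \<Rightarrow> (nat \<Rightarrow> nat \<Rightarrow> nat) \<Rightarrow> nat \<Rightarrow> nat \<Rightarrow> nat \<Rightarrow> nat" where
  "join b c j x y = (if x < b \<and> y < b then c x y else if b \<le> x \<and> b \<le> y then 2 else j)"

lemma join_ec:
  assumes "edge_coloring b k c" "j < k" "2 < k"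
  shows "edge_coloring (b + m) k (join b c j)"
  using assms unfolding edge_coloring_def join_def by auto

lemma join_rb:
  assumes "\<not> has_rainbow_K3 b c"
  shows "\<not> has_rainbow_K3 (b + m) (join b c j)"
proof
  assume "has_rainbow_K3 (b + m) (join b c j)"
  then obtain x y z where H: "x < b+m" "y<b+m" "z<b+m" "x \<noteq> y" "y \<noteq> z" "x \<noteq> z"
     "join b c j x y \<noteq> join b c j y z" "join b c j y z \<noteq> join b c j x z"
     "join b c j x y \<noteq> join b c j x z"
    unfolding has_rainbow_K3_def by blast
  show False
  proof (cases "x < b \<and> y < b \<and> z < b")
    case True
    then show ?thesis using assms H unfolding has_rainbow_K3_def join_def by auto
  next
    case False
    then show ?thesis using H unfolding join_def by (auto split: if_splits)
  qed
qed

lemma nb_join_base: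
  assumes "u < b" "col \<noteq> j"
  shows "nb (b+m) (join b c j) col u = nb b c col u"
  using assms unfolding nb_def join_def by auto

lemma nb_join_base_j:
  assumes "u < b" "\<forall>x<b. x \<noteq> u \<longrightarrow> c u x \<noteq> j"
  shows "nb (b+m) (join b c j) j u = {b..<b+m}"
  using assms unfolding nb_def join_def by (auto, metis not_le)

lemma nb_join_new_j:
  assumes "b \<le> u" "u < b + m" "j \<noteq> 2"
  shows "nb (b+m) (join b c j) j u = {..<b}"
  using assms unfolding nb_def join_def by auto

lemma nb_join_new_2:
  assumes "b \<le> u" "u < b + m" "j \<noteq> 2"
  shows "nb (b+m) (join b c j) 2 u = {b..<b+m} - {u}"
  using assms unfolding nb_def join_def by auto

lemma join_crit:
  assumes cr: "crit n m b c" and nj: "\<forall>x<b. \<forall>y<b. x \<noteq> y \<longrightarrow> c x y \<noteq> j"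
    and j2: "j \<noteq> 2" and mn: "m \<le> n"
  shows "crit n m (b + m) (join b c j)"
  unfolding crit_def
proof (intro allI impI)
  fix u v assume uv: "u < b + m" "v < b + m" "u \<noteq> v"
  let ?c = "join b c j"
  show "card (nb (b+m) ?c (?c u v) u) \<le> n \<or> card (nb (b+m) ?c (?c u v) v) \<le> m \<or>
     card (nb (b+m) ?c (?c u v) u \<union> nb (b+m) ?c (?c u v) v) \<le> n + m + 1"
  proof (cases "u < b")
    case u: True
    show ?thesis
    proof (cases "v < b")
      case v: True
      have e: "?c u v = c u v" using u v unfolding join_def by simp
      have ne: "c u v \<noteq> j" using nj u v uv by blast
      show ?thesis unfolding e nb_join_base[OF u ne] nb_join_base[OF v ne]
        using cr u v uv unfolding crit_def by blast
    next
      case v: False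
      have e: "?c u v = j" using u v unfolding join_def by simp
      have "nb (b+m) ?c j u = {b..<b+m}" using nb_join_base_j[OF u] nj u by blast
      then show ?thesis unfolding e using mn by simp
    qed
  next
    case u: False
    show ?thesis
    proof (cases "v < b")
      case v: True
      have e: "?c u v = j" using u v unfolding join_def by simp
      have "nb (b+m) ?c j v = {b..<b+m}" using nb_join_base_j[OF v] nj v by blast
      then show ?thesis unfolding e by simp
    next
      case v: False
      have e: "?c u v = 2" using u v unfolding join_def by simp
      have "nb (b+m) ?c 2 u = {b..<b+m} - {u}" using nb_join_new_2 u uv j2 by simp
      moreover have "card ({b..<b+m} - {u}) \<le> m" by (metis card_Diff1_le card_atLeastLessThan add_diff_cancel_left' finite_atLeastLessThan)
      ultimately show ?thesis unfolding e using mn by simp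
    qed
  qed
qed


primrec ext :: "(nat \<Rightarrow> nat \<Rightarrow> nat) \<Rightarrow> nat \<Rightarrow> nat \<Rightarrow> (nat \<Rightarrow> nat) \<Rightarrow> nat \<Rightarrow> nat \<Rightarrow> nat \<Rightarrow> nat" where
  "ext c b m g 0 = c"
| "ext c b m g (Suc t) = join (b + t * m) (ext c b m g t) (g t)"

lemma ext_good:
  assumes ec: "edge_coloring b k c" and rb: "\<not> has_rainbow_K3 b c" and cr: "crit n m b c"
    and cS: "\<forall>x<b. \<forall>y<b. x \<noteq> y \<longrightarrow> c x y \<in> S" and S2: "2 \<in> S"
    and gT: "\<forall>i<T. g i \<notin> S \<and> g i < k \<and> (\<forall>i'<i. g i' \<noteq> g i)"
    and mn: "m \<le> n" and k2: "2 < k"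
  shows "t \<le> T \<Longrightarrow> edge_coloring (b + t*m) k (ext c b m g t) \<and>
     \<not> has_rainbow_K3 (b + t*m) (ext c b m g t) \<and> crit n m (b + t*m) (ext c b m g t) \<and>
     (\<forall>x<b + t*m. \<forall>y<b + t*m. x \<noteq> y \<longrightarrow> ext c b m g t x y \<in> S \<union> g ` {..<t})"
proof (induction t)
  case 0
  then show ?case using ec rb cr cS by simp
next
  case (Suc t)
  then have IH: "edge_coloring (b + t*m) k (ext c b m g t)"
     "\<not> has_rainbow_K3 (b + t*m) (ext c b m g t)" "crit n m (b + t*m) (ext c b m g t)"
     "\<forall>x<b + t*m. \<forall>y<b + t*m. x \<noteq> y \<longrightarrow> ext c b m g t x y \<in> S \<union> g ` {..<t}"
    by auto
  have tT: "t < T" using Suc by simp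
  have gt: "g t \<notin> S" "g t < k" "\<forall>i'<t. g i' \<noteq> g t" using gT tT by auto
  have g2: "g t \<noteq> 2" using gt S2 by auto
  have nj: "\<forall>x<b + t*m. \<forall>y<b + t*m. x \<noteq> y \<longrightarrow> ext c b m g t x y \<noteq> g t"
    using IH(4) gt by fastforce
  have eq: "b + Suc t * m = (b + t*m) + m" by simp
  show ?case unfolding eq ext.simps
  proof (intro conjI)
    show "edge_coloring (b + t * m + m) k (join (b + t * m) (ext c b m g t) (g t))"
      using join_ec[OF IH(1) gt(2) k2] .
    show "\<not> has_rainbow_K3 (b + t * m + m) (join (b + t * m) (ext c b m g t) (g t))"
      using join_rb[OF IH(2)] .
    show "crit n m (b + t * m + m) (join (b + t * m) (ext c b m g t) (g t))"
      using join_crit[OF IH(3) nj g2 mn] .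
    show "\<forall>x<b + t * m + m. \<forall>y<b + t * m + m. x \<noteq> y \<longrightarrow>
        join (b + t * m) (ext c b m g t) (g t) x y \<in> S \<union> g ` {..<Suc t}"
      using IH(4) S2 unfolding join_def by (auto simp: lessThan_Suc)
  qed
qed


section \<open>Blow-up of the 2-coloured K5\<close>

definition tab :: "nat \<Rightarrow> nat \<Rightarrow> nat" where
  "tab a b = (let d = (a + 5 - b) mod 5 in if d = 0 then 2 else if d = 1 \<or> d = 4 then 0 else 1)"

definition c5 :: "nat \<Rightarrow> nat \<Rightarrow> nat" where
  "c5 x y = tab (x mod 5) (y mod 5)"

lemma less5: "a < (5::nat) \<Longrightarrow> a = 0 \<or> a = 1 \<or> a = 2 \<or> a = 3 \<or> a = 4"
  by auto

lemma tab_sym: "a < 5 \<Longrightarrow> b < 5 \<Longrightarrow> tab a b = tab b a"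
  using less5[of a] less5[of b] by (auto simp: tab_def)

lemma tab_lt: "tab a b < 3"
  by (simp add: tab_def Let_def)

lemma tab_rb: "a < 5 \<Longrightarrow> b < 5 \<Longrightarrow> d < 5 \<Longrightarrow>
  \<not> (tab a b \<noteq> tab b d \<and> tab b d \<noteq> tab a d \<and> tab a b \<noteq> tab a d)"
  using less5[of a] less5[of b] less5[of d] by (auto simp: tab_def)

lemma tab_2: "a < 5 \<Longrightarrow> b < 5 \<Longrightarrow> tab a b = 2 \<Longrightarrow> b = a"
  using less5[of a] less5[of b] by (auto simp: tab_def)

lemma tab_0: "a < 5 \<Longrightarrow> b < 5 \<Longrightarrow> tab a b = 0 \<Longrightarrow> b = (a+1) mod 5 \<or> b = (a+4) mod 5"
  using less5[of a] less5[of b] by (auto simp: tab_def)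

lemma tab_1: "a < 5 \<Longrightarrow> b < 5 \<Longrightarrow> tab a b = 1 \<Longrightarrow> b = (a+2) mod 5 \<or> b = (a+3) mod 5"
  using less5[of a] less5[of b] by (auto simp: tab_def)

lemma cls_card:
  assumes "e \<le> 1" "r < 5"
  shows "card {x. x < 5*h+e \<and> x mod 5 = r} \<le> h + (if r = 0 then e else 0)"
proof -
  have "{x. x < 5*h+e \<and> x mod 5 = r} \<subseteq> (\<lambda>q. 5*q + r) ` {..<h + (if r = 0 then e else 0)}"
  proof
    fix x assume x: "x \<in> {x. x < 5*h+e \<and> x mod 5 = r}"
    define q where "q = x div 5"
    have xq: "x = 5 * q + r" using x div_mult_mod_eq[of x 5] unfolding q_def by (simp add: mult.commute)
    have xl: "x < 5*h+e" using x by simp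
    have "q < h + (if r = 0 then e else 0)"
    proof (cases "r = 0")
      case True
      then show ?thesis using xl xq assms(1) by presburger
    next
      case False
      then show ?thesis using xl xq assms(1) by presburger
    qed
    then have "x = 5 * q + r \<and> q \<in> {..<h + (if r = 0 then e else 0)}" using xq by simp
    then show "x \<in> (\<lambda>q. 5*q + r) ` {..<h + (if r = 0 then e else 0)}" by blast
  qed
  then show ?thesis
    by (metis (no_types, lifting) card_image_le card_lessThan card_mono finite_imageI finite_lessThan order_trans)
qed

lemma cls2_card:
  assumes "e \<le> 1" "r1 < 5" "r2 < 5" "r1 \<noteq> r2"
  shows "card {x. x < 5*h+e \<and> (x mod 5 = r1 \<or> x mod 5 = r2)} \<le> 2*h + e"
proof -
  have "{x. x < 5*h+e \<and> (x mod 5 = r1 \<or> x mod 5 = r2)} =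
        {x. x < 5*h+e \<and> x mod 5 = r1} \<union> {x. x < 5*h+e \<and> x mod 5 = r2}" by auto
  then have "card {x. x < 5*h+e \<and> (x mod 5 = r1 \<or> x mod 5 = r2)} \<le>
       card {x. x < 5*h+e \<and> x mod 5 = r1} + card {x. x < 5*h+e \<and> x mod 5 = r2}"
    by (simp add: card_Un_le)
  also have "\<dots> \<le> 2*h+e"
    using cls_card[OF assms(1,2), of h] cls_card[OF assms(1,3), of h] assms(4)
    by (auto split: if_splits)
  finally show ?thesis .
qed

lemma card_le_via:
  assumes "A \<subseteq> {x::nat. x < N \<and> P x}" "card {x. x < N \<and> P x} \<le> K"
  shows "card A \<le> K"
proof -
  have "finite {x::nat. x < N \<and> P x}" by simp
  then have "card A \<le> card {x. x < N \<and> P x}" using assms(1) card_mono by blast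
  then show ?thesis using assms(2) by simp
qed

lemma c5_deg:
  assumes "e \<le> 1"
  shows "card (nb (5*h+e) c5 col u) \<le> 2*h + e"
proof -
  let ?N = "5*h+e"
  let ?a = "u mod 5"
  have a5: "?a < 5" by simp
  consider "col = 2" | "col = 0" | "col = 1" | "col \<ge> 3" by linarith
  then show ?thesis
  proof cases
    case 1
    have "nb ?N c5 col u \<subseteq> {x. x < ?N \<and> x mod 5 = ?a}"
      using tab_2 a5 1 unfolding nb_def c5_def by auto
    moreover have "card {x. x < ?N \<and> x mod 5 = ?a} \<le> 2*h+e"
      using cls_card[OF assms a5, of h] by (auto split: if_splits)
    ultimately show ?thesis by (rule card_le_via)
  next
    case 2
    have "nb ?N c5 col u \<subseteq> {x. x < ?N \<and> (x mod 5 = (?a+1) mod 5 \<or> x mod 5 = (?a+4) mod 5)}"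
    proof
      fix x assume "x \<in> nb ?N c5 col u"
      then have "x < ?N" "tab ?a (x mod 5) = 0" using 2 unfolding nb_def c5_def by auto
      then show "x \<in> {x. x < ?N \<and> (x mod 5 = (?a+1) mod 5 \<or> x mod 5 = (?a+4) mod 5)}"
        using tab_0[OF a5, of "x mod 5"] by simp
    qed
    moreover have "card {x. x < ?N \<and> (x mod 5 = (?a+1) mod 5 \<or> x mod 5 = (?a+4) mod 5)} \<le> 2*h+e"
      by (rule cls2_card[OF assms]) (use less5[OF a5] in auto)
    ultimately show ?thesis by (rule card_le_via)
  next
    case 3
    have "nb ?N c5 col u \<subseteq> {x. x < ?N \<and> (x mod 5 = (?a+2) mod 5 \<or> x mod 5 = (?a+3) mod 5)}"
    proof
      fix x assume "x \<in> nb ?N c5 col u"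
      then have "x < ?N" "tab ?a (x mod 5) = 1" using 3 unfolding nb_def c5_def by auto
      then show "x \<in> {x. x < ?N \<and> (x mod 5 = (?a+2) mod 5 \<or> x mod 5 = (?a+3) mod 5)}"
        using tab_1[OF a5, of "x mod 5"] by simp
    qed
    moreover have "card {x. x < ?N \<and> (x mod 5 = (?a+2) mod 5 \<or> x mod 5 = (?a+3) mod 5)} \<le> 2*h+e"
      by (rule cls2_card[OF assms]) (use less5[OF a5] in auto)
    ultimately show ?thesis by (rule card_le_via)
  next
    case 4
    have "tab a b \<noteq> col" for a b using tab_lt[of a b] 4 by simp
    then have "nb ?N c5 col u = {}" unfolding nb_def c5_def by auto
    then show ?thesis by simp
  qed
qed

lemma c5_base:
  assumes "e \<le> 1" "n = 2*h + e" "3 \<le> k"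
  shows "edge_coloring (5*h+e) k c5" "\<not> has_rainbow_K3 (5*h+e) c5" "crit n m (5*h+e) c5"
    "\<forall>x<5*h+e. \<forall>y<5*h+e. x \<noteq> y \<longrightarrow> c5 x y \<in> {0,1,2}"
proof -
  show "edge_coloring (5*h+e) k c5"
    unfolding edge_coloring_def c5_def using tab_sym tab_lt assms(3)
    by (metis less_le_trans mod_less_divisor zero_less_numeral)
  show "\<not> has_rainbow_K3 (5*h+e) c5"
    unfolding has_rainbow_K3_def c5_def using tab_rb by simp
  show "crit n m (5*h+e) c5"
    unfolding crit_def using c5_deg[OF assms(1)] assms(2) by simp
  show "\<forall>x<5*h+e. \<forall>y<5*h+e. x \<noteq> y \<longrightarrow> c5 x y \<in> {0,1,2}"
    using tab_lt unfolding c5_def by (metis insert_iff less_Suc_eq numeral_3_eq_3 One_nat_def Suc_1 less_one)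
qed

lemma k_base:
  assumes "3 \<le> k" "1 \<le> m"
  shows "edge_coloring (n+2) k (\<lambda>x y. 2)" "\<not> has_rainbow_K3 (n+2) (\<lambda>x y. 2)"
    "crit n m (n+2) (\<lambda>x y. 2)"
proof -
  show "edge_coloring (n+2) k (\<lambda>x y. 2)" using assms unfolding edge_coloring_def by simp
  show "\<not> has_rainbow_K3 (n+2) (\<lambda>x y. 2)" unfolding has_rainbow_K3_def by simp
  have "card (nb (n+2) (\<lambda>x y. 2) col u \<union> nb (n+2) (\<lambda>x y. 2) col v) \<le> n + m + 1" for col u v
  proof -
    fix col u v
    have "card (nb (n+2) (\<lambda>x y. 2) col u \<union> nb (n+2) (\<lambda>x y. 2) col v) \<le> card {..<n+2}"
      by (rule card_mono) (auto simp: nb_def)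
    then show "card (nb (n+2) (\<lambda>x y. 2) col u \<union> nb (n+2) (\<lambda>x y. 2) col v) \<le> n + m + 1"
      using assms by simp
  qed
  then show "crit n m (n+2) (\<lambda>x y. 2)" unfolding crit_def by blast
qed


lemma restrict:
  assumes "N' \<le> N" "edge_coloring N k c" "\<not> has_rainbow_K3 N c" "\<not> has_mono_double_star n m N c"
  shows "edge_coloring N' k c" "\<not> has_rainbow_K3 N' c" "\<not> has_mono_double_star n m N' c"
proof -
  show "edge_coloring N' k c" using assms(1,2) unfolding edge_coloring_def by auto
  show "\<not> has_rainbow_K3 N' c"
  proof
    assume "has_rainbow_K3 N' c"
    then have "has_rainbow_K3 N c" using assms(1) unfolding has_rainbow_K3_def
      by (meson order_less_le_trans)
    then show False using assms(3) by simp
  qed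
  show "\<not> has_mono_double_star n m N' c"
  proof
    assume "has_mono_double_star n m N' c"
    then obtain u v A B col where H: "u < N'" "v < N'" "u \<noteq> v"
        "A \<subseteq> {0..<N'}" "B \<subseteq> {0..<N'}" "card A = n" "card B = m"
        "u \<notin> A" "v \<notin> A" "u \<notin> B" "v \<notin> B" "A \<inter> B = {}"
        "c u v = col" "\<forall>a\<in>A. c u a = col" "\<forall>b\<in>B. c v b = col"
      unfolding has_mono_double_star_def by blast
    have "A \<subseteq> {0..<N}" "B \<subseteq> {0..<N}" "u < N" "v < N" using H(1,2,4,5) assms(1) by auto
    then have "has_mono_double_star n m N c" unfolding has_mono_double_star_def
      using H by blast
    then show False using assms(4) by simp
  qed
qed

lemma construction:
  fixes n m k :: nat
  assumes "n \<ge> m" and "m \<ge> 1" and "k \<ge> 3"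
  shows "\<exists>N c. (if even n then max (5 * (n div 2)) (n + 2 * m + 1) + m * (k - 3) + 1
            else max (5 * ((n - 1) div 2)) (n + 2 * m + 1) + m * (k - 3) + 2) \<le> N + 1 \<and>
          edge_coloring N k c \<and> \<not> has_rainbow_K3 N c \<and> \<not> has_mono_double_star n m N c"
proof (cases "5 * (n div 2) \<le> n + 2 * m + 1")
  case True
  have hh: "(n - 1) div 2 = n div 2" if "odd n" using that by (metis odd_two_times_div_two_nat diff_Suc_1 nonzero_mult_div_cancel_left zero_neq_numeral div_mult_self1_is_m)
  define g where "g = (\<lambda>i::nat. if i = 0 then 0 else if i = 1 then 1 else i + 1)"
  have gT: "\<forall>i<k-1. g i \<notin> {2} \<and> g i < k \<and> (\<forall>i'<i. g i' \<noteq> g i)"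
    using assms unfolding g_def by auto
  have S2: "2 \<in> {2::nat}" by simp
  have cS: "\<forall>x<n+2. \<forall>y<n+2. x \<noteq> y \<longrightarrow> (\<lambda>x y. 2::nat) x y \<in> {2}" by simp
  note kb = k_base[OF assms(3,2), of n]
  have G: "edge_coloring (n+2 + (k-1)*m) k (ext (\<lambda>x y. 2) (n+2) m g (k-1)) \<and>
     \<not> has_rainbow_K3 (n+2 + (k-1)*m) (ext (\<lambda>x y. 2) (n+2) m g (k-1)) \<and>
     crit n m (n+2 + (k-1)*m) (ext (\<lambda>x y. 2) (n+2) m g (k-1))"
    using ext_good[OF kb cS S2 gT assms(1), of "k-1"] assms by auto
  have km: "(k-1)*m = 2*m + m*(k-3)"
  proof -
    have "k - 1 = (k-3) + 2" using assms by simp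
    then show ?thesis by (simp add: algebra_simps)
  qed
  show ?thesis
    apply (rule exI[of _ "n+2 + (k-1)*m"], rule exI[of _ "ext (\<lambda>x y. 2) (n+2) m g (k-1)"])
    using G crit_no_mono[of _ k] True km hh by auto
next
  case False
  define h where "h = n div 2"
  define e where "e = n mod 2"
  have ne: "n = 2*h + e" "e \<le> 1" unfolding h_def e_def by auto
  have hh: "(n - 1) div 2 = h" if "odd n" using that unfolding h_def by (metis odd_two_times_div_two_nat diff_Suc_1 nonzero_mult_div_cancel_left zero_neq_numeral div_mult_self1_is_m)
  define g where "g = (\<lambda>i::nat. i + 3)"
  have gT: "\<forall>i<k-3. g i \<notin> {0,1,2} \<and> g i < k \<and> (\<forall>i'<i. g i' \<noteq> g i)"
    using assms unfolding g_def by auto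
  have S2: "2 \<in> {0,1,2::nat}" by simp
  note cb = c5_base[OF ne(2) ne(1) assms(3)]
  have G: "edge_coloring (5*h+e + (k-3)*m) k (ext c5 (5*h+e) m g (k-3)) \<and>
     \<not> has_rainbow_K3 (5*h+e + (k-3)*m) (ext c5 (5*h+e) m g (k-3)) \<and>
     crit n m (5*h+e + (k-3)*m) (ext c5 (5*h+e) m g (k-3))"
    using ext_good[OF cb S2 gT assms(1), of "k-3"] assms by auto
  have L: "(if even n then max (5 * (n div 2)) (n + 2 * m + 1) + m * (k - 3) + 1
            else max (5 * ((n - 1) div 2)) (n + 2 * m + 1) + m * (k - 3) + 2) \<le> 5*h+e + (k-3)*m + 1"
    using False hh ne unfolding h_def e_def by (auto simp: mult.commute odd_iff_mod_2_eq_one)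
  show ?thesis
    apply (rule exI[of _ "5*h+e + (k-3)*m"], rule exI[of _ "ext c5 (5*h+e) m g (k-3)"])
    using G crit_no_mono[of _ k] L by auto
qed

theorem proposition3:
  fixes n m k :: nat
  assumes "n \<ge> m" and "m \<ge> 1" and "k \<ge> 3"
  shows "gr_K3_double_star k n m \<ge>
           (if even n then max (5 * (n div 2)) (n + 2 * m + 1) + m * (k - 3) + 1
            else max (5 * ((n - 1) div 2)) (n + 2 * m + 1) + m * (k - 3) + 2)"
proof -
  let ?L = "(if even n then max (5 * (n div 2)) (n + 2 * m + 1) + m * (k - 3) + 1
            else max (5 * ((n - 1) div 2)) (n + 2 * m + 1) + m * (k - 3) + 2)"
  let ?P = "\<lambda>N. \<forall>c. edge_coloring N k c \<longrightarrow> has_rainbow_K3 N c \<or> has_mono_double_star n m N c"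
  obtain N c where Nc: "?L \<le> N + 1" "edge_coloring N k c" "\<not> has_rainbow_K3 N c"
    "\<not> has_mono_double_star n m N c"
    using construction[OF assms] by blast
  have "\<exists>N. ?P N" using ex_P[of k n m] assms by auto
  then have PL: "?P (Least ?P)" by (rule LeastI_ex)
  show ?thesis unfolding gr_K3_double_star_def
  proof (rule ccontr)
    assume "\<not> ?L \<le> (LEAST N. ?P N)"
    then have le: "(LEAST N. ?P N) \<le> N" using Nc(1) by simp
    note r = restrict[OF le Nc(2-4)]
    show False using PL r by blast
  qed
qed

end
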